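(* For integers $n\ge0$ and $0\le i\le n/2$ let $g(i,n)=\binom{2(n-i)}{n-i}^2\binom{n-i}{i}$. Let $p$ be an odd prime, $m,r$ positive integers, and $j$ an integer with $0\le j\le mp^{r-1}/2$. Then $$(-4)^{jp}g(jp,mp^r)\equiv(-4)^jg(j,mp^{r-1})\pmod{p^r}.$$ *)

theory Defs
  imports "HOL-Number_Theory.Number_Theory"
begin

definition g :: "nat \<Rightarrow> nat \<Rightarrow> int" where
  "g i n = int ((2 * (n - i)) choose (n - i)) ^ 2 * int ((n - i) choose i)"

end

theory Submission
  imports Defs
begin

definition pf :: "nat \<Rightarrow> nat \<Rightarrow> int" where
  "pf p n = (\<Prod>x\<in>{x\<in>{1..n}. \<not> p dvd x}. int x)"

lemma fact_split:
  fixes p n :: nat assumes "p > 0"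
  shows "(fact (p*n) :: int) = int p ^ n * fact n * pf p (p*n)"
proof -
  have fin: "finite {1..p*n}" by simp
  have "(fact (p*n) :: int) = (\<Prod>x\<in>{1..p*n}. int x)"
    by (simp add: fact_prod)
  also have "\<dots> = (\<Prod>x\<in>{x\<in>{1..p*n}. p dvd x}. int x) * (\<Prod>x\<in>{x\<in>{1..p*n}. \<not> p dvd x}. int x)"
  proof -
    have eq: "{1..p*n} = {x\<in>{1..p*n}. p dvd x} \<union> {x\<in>{1..p*n}. \<not> p dvd x}" by auto
    show ?thesis by (subst eq, rule prod.union_disjoint) auto
  qed
  also have "{x\<in>{1..p*n}. p dvd x} = (\<lambda>y. p*y) ` {1..n}"
  proof
    show "{x \<in> {1..p * n}. p dvd x} \<subseteq> (*) p ` {1..n}"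
    proof
      fix x assume "x \<in> {x \<in> {1..p * n}. p dvd x}"
      then obtain y where "x = p*y" "1 \<le> p*y" "p*y \<le> p*n" by auto
      then show "x \<in> (*) p ` {1..n}" using assms by auto
    qed
  qed (use assms in auto)
  also have "(\<Prod>x\<in>(\<lambda>y. p*y) ` {1..n}. int x) = (\<Prod>y\<in>{1..n}. int p * int y)"
    by (subst prod.reindex) (use assms in \<open>auto simp: inj_on_def\<close>)
  also have "\<dots> = int p ^ n * fact n"
    by (simp add: prod.distrib fact_prod)
  finally show ?thesis by (simp add: pf_def)
qed

lemma pf_block:
  fixes p q a :: nat assumes "p dvd q" "q > 0"
  shows "[pf p (q*a) = pf p q ^ a] (mod int q)"
proof (induction a)
  case 0 then show ?case by (simp add: pf_def)
next
  case (Suc a)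
  have eq: "{x\<in>{1..q*Suc a}. \<not> p dvd x} = {x\<in>{1..q*a}. \<not> p dvd x} \<union> {x\<in>{q*a+1..q*a+q}. \<not> p dvd x}"
    by auto
  have "pf p (q*Suc a) = pf p (q*a) * (\<Prod>x\<in>{x\<in>{q*a+1..q*a+q}. \<not> p dvd x}. int x)"
    unfolding pf_def by (subst eq, rule prod.union_disjoint) auto
  moreover have "{x\<in>{q*a+1..q*a+q}. \<not> p dvd x} = (\<lambda>y. q*a+y) ` {y\<in>{1..q}. \<not> p dvd y}"
  proof
    show "{x \<in> {q * a + 1..q * a + q}. \<not> p dvd x} \<subseteq> (+) (q * a) ` {y \<in> {1..q}. \<not> p dvd y}"
    proof
      fix x assume x: "x \<in> {x \<in> {q * a + 1..q * a + q}. \<not> p dvd x}"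
      then have "x = q*a + (x - q*a)" by auto
      moreover have "x - q*a \<in> {y \<in> {1..q}. \<not> p dvd y}"
      proof -
        have "\<not> p dvd (x - q*a)"
        proof
          assume "p dvd (x - q*a)"
          moreover have "p dvd q*a" using assms by auto
          ultimately have "p dvd (x - q*a) + q*a" by (rule dvd_add)
          then show False using x by auto
        qed
        then show ?thesis using x by auto
      qed
      ultimately show "x \<in> (+) (q * a) ` {y \<in> {1..q}. \<not> p dvd y}" by blast
    qed
  next
    show "(+) (q * a) ` {y \<in> {1..q}. \<not> p dvd y} \<subseteq> {x \<in> {q * a + 1..q * a + q}. \<not> p dvd x}"
    proof
      fix x assume "x \<in> (+) (q * a) ` {y \<in> {1..q}. \<not> p dvd y}"
      then obtain y where y: "x = q*a+y" "1 \<le> y" "y \<le> q" "\<not> p dvd y" by auto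
      have "\<not> p dvd x"
      proof
        assume "p dvd x"
        moreover have "p dvd q*a" using assms by auto
        ultimately have "p dvd x - q*a" by (rule dvd_diff_nat)
        then show False using y by auto
      qed
      then show "x \<in> {x \<in> {q * a + 1..q * a + q}. \<not> p dvd x}" using y by auto
    qed
  qed
  moreover have "(\<Prod>x\<in>(\<lambda>y. q*a+y) ` {y\<in>{1..q}. \<not> p dvd y}. int x) = (\<Prod>y\<in>{y\<in>{1..q}. \<not> p dvd y}. int (q*a+y))"
    by (subst prod.reindex) (auto simp: inj_on_def)
  moreover have "[(\<Prod>y\<in>{y\<in>{1..q}. \<not> p dvd y}. int (q*a+y)) = (\<Prod>y\<in>{y\<in>{1..q}. \<not> p dvd y}. int y)] (mod int q)"
    by (rule cong_prod) (simp add: cong_def)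
  ultimately have "[pf p (q*Suc a) = pf p (q*a) * pf p q] (mod int q)"
    by (simp add: pf_def cong_scalar_left)
  moreover have "[pf p (q*a) * pf p q = pf p q ^ a * pf p q] (mod int q)"
    using Suc.IH by (rule cong_scalar_right)
  ultimately show ?case using cong_trans by (simp add: mult.commute)
qed


lemma binom_p:
  fixes p a b :: nat assumes "p > 0" "b \<le> a"
  shows "int ((p*a) choose (p*b)) * pf p (p*b) * pf p (p*(a-b)) = int (a choose b) * pf p (p*a)"
proof -
  have e: "p*a - p*b = p*(a-b)" by (simp add: right_diff_distrib')
  have h1: "(fact (p*b) :: int) * fact (p*(a-b)) * int ((p*a) choose (p*b)) = fact (p*a)"
  proof -
    have "fact (p*b) * fact (p*a - p*b) * ((p*a) choose (p*b)) = fact (p*a)"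
      using binomial_fact_lemma[of "p*b" "p*a"] assms by simp
    then have "(of_nat (fact (p*b) * fact (p*a - p*b) * ((p*a) choose (p*b))) :: int) = of_nat (fact (p*a))"
      by simp
    then show ?thesis unfolding e by (simp only: of_nat_mult of_nat_fact)
  qed
  have h2: "(fact b :: int) * fact (a-b) * int (a choose b) = fact a"
  proof -
    have "fact b * fact (a - b) * (a choose b) = fact a"
      using binomial_fact_lemma[of b a] assms by simp
    then have "(of_nat (fact b * fact (a - b) * (a choose b)) :: int) = of_nat (fact a)"
      by simp
    then show ?thesis by (simp only: of_nat_mult of_nat_fact)
  qed
  have pa: "int p ^ a = int p ^ b * int p ^ (a-b)" using assms by (simp add: power_add[symmetric])
  define X where "X = int p ^ a * (fact b :: int) * fact (a-b)"
  have X0: "X \<noteq> 0" using assms by (simp add: X_def)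
  have h3: "(int p ^ b * fact b * pf p (p*b)) * (int p ^ (a-b) * fact (a-b) * pf p (p*(a-b))) * int ((p*a) choose (p*b))
      = int p ^ a * (fact b * fact (a-b) * int (a choose b)) * pf p (p*a)"
    using h1 h2 unfolding fact_split[OF assms(1)] by simp
  have "X * (int ((p*a) choose (p*b)) * pf p (p*b) * pf p (p*(a-b))) = X * (int (a choose b) * pf p (p*a))"
    using h3 unfolding X_def pa by (simp add: ac_simps)
  then show ?thesis using X0 by simp
qed

lemma four_pow:
  fixes p w j :: nat
  assumes "prime p" "odd p" "p^w dvd j"
  shows "[(4::int)^(j*p) = 4^j] (mod int p^(w+1))"
proof -
  obtain j' where j: "j = p^w * j'" using assms(3) by blast
  have p1: "p \<ge> 1" using assms(1) prime_gt_0_nat by (simp add: Suc_leI)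
  have nd: "\<not> p dvd 4"
  proof
    assume "p dvd 4"
    then have "p dvd 2^2" by simp
    then have "p dvd 2" using assms(1) prime_dvd_power by blast
    then have "p \<le> 2" by (simp add: dvd_imp_le)
    then show False using assms(1,2) prime_ge_2_nat[of p] by (metis le_antisym even_numeral)
  qed
  have cop: "coprime 4 (p^(w+1))"
    using prime_imp_coprime[OF assms(1) nd] by (simp add: coprime_commute)
  have tot: "totient (p^(w+1)) = p^w*(p-1)" using totient_prime_power_Suc[OF assms(1)] by simp
  have "[(4::nat)^totient (p^(w+1)) = 1] (mod p^(w+1))" using euler_theorem[OF cop] .
  then have "[(4::nat)^(p^w*(p-1)) = 1] (mod p^(w+1))" unfolding tot .
  then have "[((4::nat)^(p^w*(p-1)))^j' = 1^j'] (mod p^(w+1))" by (rule cong_pow)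
  moreover have "j*(p-1) = p^w*(p-1)*j'" by (simp add: j ac_simps)
  ultimately have e1: "[(4::nat)^(j*(p-1)) = 1] (mod p^(w+1))"
    by (simp only: power_mult power_one)
  have "(4::nat)^(j*p) = 4^j * 4^(j*(p-1))"
    using p1 by (simp add: power_add[symmetric] algebra_simps)
  then have "[(4::nat)^(j*p) = 4^j * 1] (mod p^(w+1))"
    using cong_scalar_left[OF e1, of "4^j"] by simp
  then have "[int (4^(j*p)) = int (4^j)] (mod int (p^(w+1)))"
    by (simp only: cong_int_iff mult_1_right)
  then show ?thesis by (simp only: of_nat_power of_nat_numeral)
qed

lemma key:
  fixes p w j k :: nat
  assumes "prime p" "odd p" "j \<le> k" "p^w dvd j" "p^w dvd k"
  shows "[4^(j*p) * pf p (p*(2*k))^2 = 4^j * (pf p (p*k)^3 * pf p (p*j) * pf p (p*(k-j)))] (mod int p^(w+1))"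
proof -
  obtain j' where j: "j = p^w * j'" using assms(4) by blast
  obtain k' where k: "k = p^w * k'" using assms(5) by blast
  define q where "q = p^(w+1)"
  have pos: "p^w > 0" using assms(1) prime_gt_0_nat by simp
  have p0: "p > 0" using assms(1) prime_gt_0_nat by simp
  have jk: "j' \<le> k'" using assms(3) pos p0 unfolding j k by (simp add: mult_le_cancel1)
  have q0: "q > 0" "p dvd q" using pos p0 by (auto simp: q_def)
  have qq: "int p ^(w+1) = int q" by (simp add: q_def)
  define c where "c = pf p q"
  have qp: "q = p * p^w" by (simp add: q_def)
  have e1: "p*(2*k) = q*(2*k')" "p*k = q*k'" "p*j = q*j'" "p*(k-j) = q*(k'-j')"
    unfolding qp j k by (simp_all only: mult.assoc mult.left_commute diff_mult_distrib2[symmetric])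
  have b: "\<And>a. [pf p (q*a) = c^a] (mod int q)" unfolding c_def using pf_block q0 by blast
  have L: "[pf p (p*(2*k))^2 = (c^(2*k'))^2] (mod int q)" unfolding e1 using b by (rule cong_pow)
  have R: "[pf p (p*k)^3 * pf p (p*j) * pf p (p*(k-j)) = (c^k')^3 * c^j' * c^(k'-j')] (mod int q)"
    unfolding e1 using b by (intro cong_mult cong_pow)
  have same: "(c^(2*k'))^2 = (c^k')^3 * c^j' * c^(k'-j')"
  proof -
    have "(c^(2*k'))^2 = c^(2*k'*2)" by (simp only: power_mult)
    moreover have "(c^k')^3 * c^j' * c^(k'-j') = c^(k'*3 + j' + (k'-j'))" by (simp only: power_add power_mult)
    moreover have "k'*3 + j' + (k'-j') = 2*k'*2" using jk by simp
    ultimately show ?thesis by simp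
  qed
  have F: "[(4::int)^(j*p) = 4^j] (mod int q)" using four_pow[OF assms(1,2,4)] qq by simp
  have "[4^(j*p) * pf p (p*(2*k))^2 = 4^j * ((c^k')^3 * c^j' * c^(k'-j'))] (mod int q)"
    using cong_mult[OF F L] by (simp only: same)
  moreover have "[4^j * ((c^k')^3 * c^j' * c^(k'-j')) = 4^j * (pf p (p*k)^3 * pf p (p*j) * pf p (p*(k-j)))] (mod int q)"
    by (rule cong_scalar_left, rule cong_sym, rule R)
  ultimately show ?thesis unfolding qq by (rule cong_trans)
qed

lemma pf_coprime:
  fixes p n :: nat assumes "prime p"
  shows "coprime (pf p n) (int p)"
  unfolding pf_def
proof (rule prod_coprime_left)
  fix i assume "i \<in> {x \<in> {1..n}. \<not> p dvd x}"
  then have "\<not> p dvd i" by simp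
  then have "coprime p i" using prime_imp_coprime[OF assms] by blast
  then show "coprime (int i) (int p)" by (simp add: coprime_int_iff coprime_commute)
qed

lemma pf_nonzero:
  fixes p n :: nat
  shows "pf p n \<noteq> 0"
  unfolding pf_def by (subst prod_zero_iff) auto

lemma val_lemma:
  fixes p r N j :: nat
  assumes "prime p" "p^(r-1) dvd N" "j \<le> N"
  shows "\<exists>w. w \<le> r-1 \<and> p^w dvd j \<and> p^w dvd N \<and> p^(r-1-w) dvd (N choose j)"
proof (cases "p^(r-1) dvd j")
  case True
  then show ?thesis using assms by (intro exI[of _ "r-1"]) auto
next
  case False
  then have j0: "j > 0" by (metis dvd_0_right gr0I)
  define w where "w = multiplicity p j"
  have wj: "p^w dvd j" unfolding w_def by (rule multiplicity_dvd)
  have wr: "w < r-1"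
  proof (rule ccontr)
    assume "\<not> w < r-1"
    then have "p^(r-1) dvd p^w" by (simp add: le_imp_power_dvd)
    then show False using wj False dvd_trans by blast
  qed
  have wN: "p^w dvd N" using wr assms(2) le_imp_power_dvd[of w "r-1" p] dvd_trans by fastforce
  have C0: "N choose j \<noteq> 0" using assms(3) by simp
  have "j * (N choose j) = N * ((N-1) choose (j-1))" using times_binomial_minus1_eq[OF j0] .
  then have "p^(r-1) dvd j * (N choose j)" using assms(2) by (metis dvd_mult2)
  moreover have np: "\<not> is_unit p" using assms(1) by (simp add: prime_nat_iff)
  ultimately have "r-1 \<le> multiplicity p (j * (N choose j))"
    using power_dvd_iff_le_multiplicity[of "j * (N choose j)" p] j0 C0 by simp
  also have "\<dots> = w + multiplicity p (N choose j)"
    unfolding w_def using prime_elem_multiplicity_mult_distrib[of p j "N choose j"] assms(1) j0 C0 by simp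
  finally have "r-1-w \<le> multiplicity p (N choose j)" by simp
  then have "p^(r-1-w) dvd (N choose j)" by (rule multiplicity_dvd')
  then show ?thesis using wr wj wN by (intro exI[of _ w]) auto
qed

lemma choose_dvd:
  fixes j k :: nat assumes "j \<le> k"
  shows "((k+j) choose j) dvd ((2*k) choose k) * (k choose j)"
proof -
  have "((2*k) choose k) * (k choose j) = ((2*k) choose j) * ((2*k-j) choose (k-j))"
    using choose_mult[of j k "2*k"] assms by simp
  moreover have "((2*k) choose (k+j)) * ((k+j) choose j) = ((2*k) choose j) * ((2*k-j) choose (k+j-j))"
    using choose_mult[of j "k+j" "2*k"] assms by simp
  moreover have "(2*k-j) choose (k+j-j) = (2*k-j) choose (k-j)"
    using binomial_symmetric[of k "2*k-j"] assms by (simp add: numeral_2_eq_2)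
  ultimately show ?thesis by (metis dvd_triv_right)
qed

theorem mainTheorem16:
  fixes p m r j :: nat
  assumes "prime p" and "odd p" and "m > 0" and "r > 0"
    and "2 * j \<le> m * p ^ (r - 1)"
  shows "[(-4::int) ^ (j * p) * g (j * p) (m * p ^ r)
          = (-4) ^ j * g j (m * p ^ (r - 1))] (mod (int p ^ r))"
proof -
  define N where "N = m * p ^ (r - 1)"
  define k where "k = N - j"
  have p0: "p > 0" using assms(1) prime_gt_0_nat by simp
  have jk: "j \<le> k" "k + j = N" using assms(5) unfolding k_def N_def by auto
  have pr: "p ^ r = p * p ^ (r-1)" using assms(4) by (metis Suc_diff_1 power_Suc)
  have hn: "m * p ^ r - j * p = p * k" unfolding pr k_def N_def by (simp add: diff_mult_distrib2 ac_simps)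
  have hN: "N - j = k" unfolding k_def ..
  define Y where "Y = int ((p*(2*k)) choose (p*k))^2 * int ((p*k) choose (p*j))"
  define X where "X = int ((2*k) choose k)^2 * int (k choose j)"
  define D where "D = pf p (p*k)^3 * pf p (p*j) * pf p (p*(k-j))"
  define E where "E = pf p (p*(2*k))^2"
  have gY: "g (j * p) (m * p ^ r) = Y" unfolding g_def Y_def hn by (simp add: ac_simps)
  have gX: "g j (m * p ^ (r - 1)) = X" unfolding g_def X_def N_def[symmetric] hN ..
  have B1: "int ((p*(2*k)) choose (p*k)) * pf p (p*k) * pf p (p*k) = int ((2*k) choose k) * pf p (p*(2*k))"
    using binom_p[OF p0, of k "2*k"] by simp
  have B2: "int ((p*k) choose (p*j)) * pf p (p*j) * pf p (p*(k-j)) = int (k choose j) * pf p (p*k)"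
    using binom_p[OF p0 jk(1)] .
  have "(Y * D) * pf p (p*k) = (X * E) * pf p (p*k)"
  proof -
    have "(Y * D) * pf p (p*k) = (int ((p*(2*k)) choose (p*k)) * pf p (p*k) * pf p (p*k))^2
       * (int ((p*k) choose (p*j)) * pf p (p*j) * pf p (p*(k-j)))"
      unfolding Y_def D_def by (simp add: power2_eq_square power3_eq_cube ac_simps)
    also have "\<dots> = (int ((2*k) choose k) * pf p (p*(2*k)))^2 * (int (k choose j) * pf p (p*k))"
      unfolding B1 B2 ..
    also have "\<dots> = (X * E) * pf p (p*k)"
      unfolding X_def E_def by (simp add: power2_eq_square ac_simps)
    finally show ?thesis .
  qed
  then have YD: "Y * D = X * E" using pf_nonzero by simp
  obtain w where w: "w \<le> r-1" "p^w dvd j" "p^w dvd N" "p^(r-1-w) dvd (N choose j)"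
    using val_lemma[OF assms(1), of r N j] assms(5) unfolding N_def by auto
  have wk: "p^w dvd k" unfolding k_def using w(3,2) by (rule dvd_diff_nat)
  have K: "[4^(j*p) * E = 4^j * D] (mod int p^(w+1))"
    unfolding E_def D_def by (rule key[OF assms(1,2) jk(1) w(2) wk])
  then have K': "int p^(w+1) dvd 4^(j*p) * E - 4^j * D" by (simp add: cong_iff_dvd_diff)
  have "(N choose j) dvd ((2*k) choose k) * (k choose j)"
    using choose_dvd[OF jk(1)] jk(2) by simp
  then have "(N choose j) dvd ((2*k) choose k)^2 * (k choose j)"
    by (simp add: power2_eq_square dvd_mult2 mult.assoc)
  then have "p^(r-1-w) dvd ((2*k) choose k)^2 * (k choose j)" using w(4) dvd_trans by blast
  then have Xd: "int p^(r-1-w) dvd X" unfolding X_def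
    by (metis of_nat_dvd_iff of_nat_mult of_nat_power)
  have "int p^(r-1-w) * int p^(w+1) dvd X * (4^(j*p) * E - 4^j * D)"
    using Xd K' by (rule mult_dvd_mono)
  moreover have "int p^(r-1-w) * int p^(w+1) = int p^r"
  proof -
    have "r-1-w + (w+1) = r" using w(1) assms(4) by simp
    then show ?thesis by (metis power_add)
  qed
  ultimately have "int p^r dvd 4^(j*p) * (X * E) - 4^j * (X * D)"
    by (simp add: algebra_simps)
  then have "[4^(j*p) * (X * E) = 4^j * (X * D)] (mod int p^r)" by (simp add: cong_iff_dvd_diff)
  then have "[(4^(j*p) * Y) * D = (4^j * X) * D] (mod int p^r)"
  proof -
    assume c: "[4^(j*p) * (X * E) = 4^j * (X * D)] (mod int p^r)"
    have a1: "(4^(j*p) * Y) * D = 4^(j*p) * (X * E)" using YD by (simp add: ac_simps)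
    have a2: "(4^j * X) * D = 4^j * (X * D)" by (simp add: ac_simps)
    show ?thesis unfolding a1 a2 by (rule c)
  qed
  moreover have "coprime D (int p^r)"
    unfolding D_def using pf_coprime[OF assms(1)]
    by (simp add: coprime_mult_left_iff coprime_power_right_iff coprime_power_left_iff)
  ultimately have "[4^(j*p) * Y = 4^j * X] (mod int p^r)"
    using cong_mult_rcancel by blast
  then have "[(-1)^j * (4^(j*p) * Y) = (-1)^j * (4^j * X)] (mod int p^r)"
    by (rule cong_scalar_left)
  moreover have "(-4::int)^(j*p) = (-1)^j * 4^(j*p)"
  proof -
    have "(-4::int)^(j*p) = (-1)^(j*p) * 4^(j*p)" by (simp add: power_mult_distrib[symmetric])
    moreover have "(-1::int)^(j*p) = (-1)^j"
    proof -
      have "(-1::int)^(j*p) = ((-1)^p)^j" by (simp add: power_mult[symmetric] mult.commute)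
      moreover have "(-1::int)^p = -1" using assms(2) by simp
      ultimately show ?thesis by simp
    qed
    ultimately show ?thesis by simp
  qed
  moreover have "(-4::int)^j = (-1)^j * 4^j" by (simp add: power_mult_distrib[symmetric])
  ultimately show ?thesis unfolding gY gX by (simp add: ac_simps)
qed

end
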